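(* Let $N\ge1$ and let $\mathbf a\in\mathbb{R}^{N+1}$ have either all coordinates strictly positive or all coordinates strictly negative. Equip $T_{\mathbf e_{\mathbf a}}\Delta_N^0$ with the Euclidean scalar product $\langle\cdot,\cdot\rangle$ of $\mathbb{R}^{N+1}$, and define on $\Delta_N^0$ the scalar product $\langle\boldsymbol\lambda,\boldsymbol\mu\rangle_{\mathcal C_{\mathbf a}}=\langle\mathrm{Log}_{\mathcal C_{\mathbf a}}(\boldsymbol\lambda),\mathrm{Log}_{\mathcal C_{\mathbf a}}(\boldsymbol\mu)\rangle$, the norm $\|\boldsymbol\lambda\|_{\mathcal C_{\mathbf a}}=\sqrt{\langle\boldsymbol\lambda,\boldsymbol\lambda\rangle_{\mathcal C_{\mathbf a}}}$, and $d_{\mathcal C_{\mathbf a}}(\boldsymbol\lambda,\boldsymbol\mu)=\|\boldsymbol\lambda\ominus_{\mathcal C_{\mathbf a}}\boldsymbol\mu\|_{\mathcal C_{\mathbf a}}$, where $\boldsymbol\lambda\ominus_{\mathcal C_{\mathbf a}}\boldsymbol\mu=\boldsymbol\lambda\oplus_{\mathcal C_{\mathbf a}}((-1)\odot_{\mathcal C_{\mathbf a}}\boldsymbol\mu)$. Then $d_{\mathcal C_{\mathbf a}}$ is a distance on $\Delta_N^0$ and: (i) it is bi-invariant: $d_{\mathcal C_{\mathbf a}}(\boldsymbol\gamma\oplus_{\mathcal C_{\mathbf a}}\boldsymbol\lambda,\boldsymbol\gamma\oplus_{\mathcal C_{\mathbf a}}\boldsymbol\mu)=d_{\mathcal C_{\mathbf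 a}}(\boldsymbol\lambda,\boldsymbol\mu)$ for all $\boldsymbol\gamma,\boldsymbol\lambda,\boldsymbol\mu\in\Delta_N^0$; (ii) $\mathrm{Log}_{\mathcal C_{\mathbf a}}$ and $\mathrm{Exp}_{\mathcal C_{\mathbf a}}$ are linear isometries between $(\Delta_N^0,\langle\cdot,\cdot\rangle_{\mathcal C_{\mathbf a}})$ and $(T_{\mathbf e_{\mathbf a}}\Delta_N^0,\langle\cdot,\cdot\rangle)$; (iii) for all $\boldsymbol\lambda,\boldsymbol\mu\in\Delta_N^0$, $$d_{\mathcal C_{\mathbf a}}(\boldsymbol\lambda,\boldsymbol\mu)^2=\sum_{i=1}^{N+1}(\mathbf e_{\mathbf a})_i^2\left(\ln\frac{\lambda_i}{\mu_i}-\frac{a_i}{\sum_{k=1}^{N+1}a_k(\mathbf e_{\mathbf a})_k}\sum_{j=1}^{N+1}(\mathbf e_{\mathbf a})_j\ln\frac{\lambda_j}{\mu_j}\right)^2.$$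
   Context: $\mathbb{R}^{N+1}_{>0}$ is the open positive orthant with componentwise multiplication $\mathbf x\oplus\mathbf y=(x_iy_i)_i$ and neutral element $\mathbf 1=(1,\dots,1)$. $\Delta_N^0=\{\boldsymbol\lambda\in\mathbb{R}^{N+1}_{>0}\mid\sum_i\lambda_i=1\}$. For $\mathbf x\in\mathbb{R}^{N+1}_{>0}$ let $t_{\mathbf a}(\mathbf x)$ be the unique real $t$ with $\sum_ix_ie^{a_it}=1$ and $\mathcal C_{\mathbf a}(\mathbf x)=(x_ie^{a_it_{\mathbf a}(\mathbf x)})_i\in\Delta_N^0$. The abelian Lie group structure on $\Delta_N^0$ is $\boldsymbol\lambda\oplus_{\mathcal C_{\mathbf a}}\boldsymbol\mu=\mathcal C_{\mathbf a}(\boldsymbol\lambda\oplus\boldsymbol\mu)$, with neutral element $\mathbf e_{\mathbf a}=\mathcal C_{\mathbf a}(\mathbf 1)$ and Lie algebra $T_{\mathbf e_{\mathbf a}}\Delta_N^0=\{\boldsymbol\xi\in\mathbb{R}^{N+1}\mid\sum_i\xi_i=0\}$; $\mathrm{Exp}_{\mathcal C_{\mathbf a}}$ is its Lie group exponential map (a global diffeomorphism onto $\Delta_N^0$) and $\mathrm{Log}_{\mathcal C_{\mathbf a}}$ its inverse. The scalar multiplication is $c\odot_{\mathcal C_{\mathbf a}}\boldsymbol\lambda=\mathrm{Exp}_{\mathcal C_{\mathbf a}}(c\,\mathrm{Log}_{\mathcal C_{\mathbf a}}(\boldsymbol\lambda))$, which makes $(\Delta_N^0,\oplus_{\mathcal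 C_{\mathbf a}},\odot_{\mathcal C_{\mathbf a}})$ a real vector space. *)

theory Defs
  imports "HOL-Analysis.Analysis"
begin

text \<open>Vectors in R^(N+1) are modelled as real^'n with CARD('n) = N+1.\<close>

definition cmult :: "real^'n \<Rightarrow> real^'n \<Rightarrow> real^'n" where
  "cmult x y = (\<chi> i. x$i * y$i)"

definition simplex0 :: "(real^'n) set" where
  "simplex0 = {x. (\<forall>i. x$i > 0) \<and> (\<Sum>i\<in>UNIV. x$i) = 1}"

definition tangent0 :: "(real^'n) set" where
  "tangent0 = {\<xi>. (\<Sum>i\<in>UNIV. \<xi>$i) = 0}"

definition t_a :: "real^'n \<Rightarrow> real^'n \<Rightarrow> real" where
  "t_a a x = (THE t. (\<Sum>i\<in>UNIV. x$i * exp (a$i * t)) = 1)"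

definition Cl :: "real^'n \<Rightarrow> real^'n \<Rightarrow> real^'n" where
  "Cl a x = (\<chi> i. x$i * exp (a$i * t_a a x))"

definition oplusC :: "real^'n \<Rightarrow> real^'n \<Rightarrow> real^'n \<Rightarrow> real^'n" where
  "oplusC a l m = Cl a (cmult l m)"

definition eC :: "real^'n \<Rightarrow> real^'n" where
  "eC a = Cl a 1"

definition one_param :: "real^'n \<Rightarrow> real^'n \<Rightarrow> (real \<Rightarrow> real^'n) \<Rightarrow> bool" where
  "one_param a \<xi> \<gamma> \<longleftrightarrow> (\<forall>t. \<gamma> t \<in> simplex0) \<and> \<gamma> 0 = eC a \<and>
     (\<forall>s t. \<gamma> (s + t) = oplusC a (\<gamma> s) (\<gamma> t)) \<and>
     (\<gamma> has_vector_derivative \<xi>) (at 0)"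

definition ExpC :: "real^'n \<Rightarrow> real^'n \<Rightarrow> real^'n" where
  "ExpC a \<xi> = (THE l. \<exists>\<gamma>. one_param a \<xi> \<gamma> \<and> \<gamma> 1 = l)"

definition LogC :: "real^'n \<Rightarrow> real^'n \<Rightarrow> real^'n" where
  "LogC a l = inv_into tangent0 (ExpC a) l"

definition smultC :: "real^'n \<Rightarrow> real \<Rightarrow> real^'n \<Rightarrow> real^'n" where
  "smultC a c l = ExpC a (c *\<^sub>R LogC a l)"

definition ominusC :: "real^'n \<Rightarrow> real^'n \<Rightarrow> real^'n \<Rightarrow> real^'n" where
  "ominusC a l m = oplusC a l (smultC a (-1) m)"

definition innerC :: "real^'n \<Rightarrow> real^'n \<Rightarrow> real^'n \<Rightarrow> real" where
  "innerC a l m = LogC a l \<bullet> LogC a m"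

definition normC :: "real^'n \<Rightarrow> real^'n \<Rightarrow> real" where
  "normC a l = sqrt (innerC a l l)"

definition distC :: "real^'n \<Rightarrow> real^'n \<Rightarrow> real^'n \<Rightarrow> real" where
  "distC a l m = normC a (ominusC a l m)"

end

theory Submission
  imports Defs
begin


lemma exp_le_quad: fixes x :: real assumes "x \<le> 1" shows "exp x \<le> 1 + x + x\<^sup>2"
proof (cases "x \<ge> 0")
  case True then show ?thesis using exp_bound assms by auto
next
  case False
  define g where "g y = 1 + y + y\<^sup>2 - exp y" for y :: real
  have "g 0 \<le> g x"
  proof (rule DERIV_nonpos_imp_nonincreasing[of x 0 g])
    show "x \<le> 0" using False by simp
    fix y :: real assume "x \<le> y" "y \<le> 0"
    have "DERIV g y :> 1 + 2 * y - exp y"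
      unfolding g_def by (auto intro!: derivative_eq_intros)
    moreover have "1 + 2 * y - exp y \<le> 0" using exp_ge_add_one_self[of y] \<open>y \<le> 0\<close> by linarith
    ultimately show "\<exists>d. DERIV g y :> d \<and> d \<le> 0" by blast
  qed
  then show ?thesis by (simp add: g_def)
qed

lemma abs_exp_minus: fixes x :: real assumes "x \<le> 1" shows "\<bar>exp x - 1 - x\<bar> \<le> x\<^sup>2"
proof -
  have "exp x - 1 - x \<ge> 0" using exp_ge_add_one_self[of x] by linarith
  then show ?thesis using exp_le_quad[OF assms] by simp
qed

lemma additive_deriv:
  fixes f :: "real \<Rightarrow> real"
  assumes add: "\<And>s t. f (s + t) = f s + f t" and d: "(f has_real_derivative v) (at 0)"
  shows "f 1 = v"
proof -
  have f0: "f 0 = 0" using add[of 0 0] by simp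
  have "\<forall>x. DERIV (\<lambda>t. f t - v * t) x :> 0"
  proof
    fix x
    have "((\<lambda>h. f h + f x) has_real_derivative v) (at 0)"
      using d by (auto intro!: derivative_eq_intros)
    then have "((\<lambda>h. f (h + x)) has_real_derivative v) (at 0)"
      using add by (simp add: add.commute)
    then have "(f has_real_derivative v) (at (0 + x))" using DERIV_shift by blast
    then show "DERIV (\<lambda>t. f t - v * t) x :> 0"
      by (auto intro!: derivative_eq_intros)
  qed
  from DERIV_isconst_all[OF this, of 1 0] f0 show ?thesis by simp
qed

lemma quad_bound_deriv:
  fixes g :: "real \<Rightarrow> 'a::real_normed_vector"
  assumes r: "r > 0" and B: "B \<ge> 0"
    and bnd: "\<And>t. \<bar>t\<bar> < r \<Longrightarrow> norm (g t - g 0 - t *\<^sub>R v) \<le> B * t\<^sup>2"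
  shows "(g has_vector_derivative v) (at 0)"
  unfolding has_vector_derivative_def has_derivative_at_alt
proof (intro conjI allI impI)
  show "bounded_linear (\<lambda>h. h *\<^sub>R v)" by (rule bounded_linear_scaleR_left)
  fix e :: real assume e: "e > 0"
  define d where "d = min r (e / (B + 1))"
  have d: "d > 0" using r e B by (simp add: d_def)
  have "\<forall>y. norm (y - 0) < d \<longrightarrow> norm (g y - g 0 - (y - 0) *\<^sub>R v) \<le> e * norm (y - 0)"
  proof (intro allI impI)
    fix y :: real assume y: "norm (y - 0) < d"
    then have yr: "\<bar>y\<bar> < r" and ye: "\<bar>y\<bar> < e / (B + 1)" by (auto simp: d_def)
    have "norm (g y - g 0 - y *\<^sub>R v) \<le> B * y\<^sup>2" using bnd[OF yr] .
    also have "B * y\<^sup>2 = (B * \<bar>y\<bar>) * \<bar>y\<bar>" by (simp add: power2_eq_square abs_mult_self_eq)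
    also have "\<dots> \<le> e * \<bar>y\<bar>"
    proof (rule mult_right_mono)
      have "B * \<bar>y\<bar> \<le> (B + 1) * \<bar>y\<bar>" by (simp add: mult_right_mono)
      also have "\<dots> \<le> (B + 1) * (e / (B + 1))" using ye B by (intro mult_left_mono) auto
      also have "\<dots> = e" using B by simp
      finally show "B * \<bar>y\<bar> \<le> e" .
    qed simp
    finally show "norm (g y - g 0 - (y - 0) *\<^sub>R v) \<le> e * norm (y - 0)" by simp
  qed
  with d show "\<exists>d>0. \<forall>y. norm (y - 0) < d \<longrightarrow> norm (g y - g 0 - (y - 0) *\<^sub>R v) \<le> e * norm (y - 0)"
    by blast
qed

context
  fixes a :: "real^'n"
  assumes apos: "\<And>i. a$i > 0"
begin

lemma sum_strict_mono_t:
  assumes "\<And>i. x$i > 0" "t < s"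
  shows "(\<Sum>i\<in>UNIV. x$i * exp (a$i * t)) < (\<Sum>i\<in>UNIV. x$i * exp (a$i * s))"
  by (rule sum_strict_mono) (use assms apos in auto)

lemma ta_ex:
  assumes xpos: "\<And>i. x$i > 0"
  shows "\<exists>t. (\<Sum>i\<in>UNIV. x$i * exp (a$i * t)) = 1"
proof -
  define f where "f t = (\<Sum>i\<in>UNIV. x$i * exp (a$i * t))" for t
  define S where "S = (\<Sum>i\<in>UNIV. x$i)"
  have Spos: "S > 0" unfolding S_def by (rule sum_pos) (use xpos in auto)
  obtain i0 :: 'n where True by blast
  define t2 where "t2 = max 0 (- ln (x$i0) / a$i0)"
  define t1 where "t1 = - \<bar>ln S\<bar> * (\<Sum>j\<in>UNIV. 1 / a$j)"
  have inv_pos: "(\<Sum>j\<in>UNIV. 1 / a$j) \<ge> 0" by (rule sum_nonneg) (simp add: less_imp_le apos)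
  have "f t2 \<ge> x$i0 * exp (a$i0 * t2)"
    unfolding f_def by (rule member_le_sum) (use xpos in \<open>auto intro!: mult_nonneg_nonneg less_imp_le\<close>)
  moreover have "x$i0 * exp (a$i0 * t2) \<ge> x$i0 * exp (a$i0 * (- ln (x$i0) / a$i0))"
  proof -
    have "a$i0 * t2 \<ge> a$i0 * (- ln (x$i0) / a$i0)"
      by (intro mult_left_mono) (auto simp: t2_def less_imp_le apos)
    then show ?thesis using xpos[of i0] by (intro mult_left_mono) auto
  qed
  moreover have "x$i0 * exp (a$i0 * (- ln (x$i0) / a$i0)) = 1"
    using xpos[of i0] apos[of i0] by (simp add: exp_minus)
  ultimately have f2: "f t2 \<ge> 1" by linarith
  have "f t1 \<le> (\<Sum>i\<in>UNIV. x$i * exp (- ln S))"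
    unfolding f_def
  proof (rule sum_mono)
    fix i :: 'n
    have "1 / a$i \<le> (\<Sum>j\<in>UNIV. 1 / a$j)"
      by (rule member_le_sum) (simp_all add: less_imp_le[OF apos])
    then have "a$i * (1 / a$i) \<le> a$i * (\<Sum>j\<in>UNIV. 1 / a$j)"
      using apos[of i] by (intro mult_left_mono) auto
    then have "1 \<le> a$i * (\<Sum>j\<in>UNIV. 1 / a$j)" using apos[of i] by simp
    then have "\<bar>ln S\<bar> * 1 \<le> \<bar>ln S\<bar> * (a$i * (\<Sum>j\<in>UNIV. 1 / a$j))"
      by (intro mult_left_mono) auto
    then have "a$i * t1 \<le> - ln S" unfolding t1_def by (auto simp: algebra_simps)
    then show "x$i * exp (a$i * t1) \<le> x$i * exp (- ln S)"
      using xpos[of i] by (intro mult_left_mono) auto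
  qed
  also have "\<dots> = 1" using Spos by (simp add: exp_minus S_def[symmetric] sum_distrib_right[symmetric])
  finally have f1: "f t1 \<le> 1" .
  have "t1 \<le> 0" unfolding t1_def using inv_pos by (simp add: mult_nonneg_nonneg)
  moreover have "0 \<le> t2" unfolding t2_def by simp
  ultimately have "t1 \<le> t2" by linarith
  moreover have "continuous_on {t1..t2} f" unfolding f_def
    by (intro continuous_intros)
  ultimately obtain t where "f t = 1" using IVT'[of f t1 1 t2] f1 f2 by auto
  then show ?thesis unfolding f_def by blast
qed

lemma ta_eq:
  assumes xpos: "\<And>i. x$i > 0"
  shows "(\<Sum>i\<in>UNIV. x$i * exp (a$i * t_a a x)) = 1"
proof -
  have "\<exists>!t. (\<Sum>i\<in>UNIV. x$i * exp (a$i * t)) = 1"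
  proof (rule ex_ex1I)
    show "\<exists>t. (\<Sum>i\<in>UNIV. x$i * exp (a$i * t)) = 1" by (rule ta_ex[OF xpos])
    fix t s assume "(\<Sum>i\<in>UNIV. x$i * exp (a$i * t)) = 1" "(\<Sum>i\<in>UNIV. x$i * exp (a$i * s)) = 1"
    then show "t = s" using sum_strict_mono_t[OF xpos, of t s] sum_strict_mono_t[OF xpos, of s t]
      by (cases t s rule: linorder_cases) auto
  qed
  then show ?thesis unfolding t_a_def by (rule theI')
qed

lemma ta_unique:
  assumes xpos: "\<And>i. x$i > 0" and "(\<Sum>i\<in>UNIV. x$i * exp (a$i * t)) = 1"
  shows "t_a a x = t"
proof -
  note ta_eq[OF xpos]
  then show ?thesis using assms(2) sum_strict_mono_t[OF xpos, of t "t_a a x"] sum_strict_mono_t[OF xpos, of "t_a a x" t]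
    by (cases t "t_a a x" rule: linorder_cases) auto
qed

end



context
  fixes a :: "real^'n"
  assumes apos: "\<And>i. a$i > 0"
begin

lemmas ta_eq' = ta_eq[OF apos]
lemmas ta_unique' = ta_unique[OF apos]

lemma simplex_pos: "l \<in> simplex0 \<Longrightarrow> l$i > 0" by (simp add: simplex0_def)
lemma simplex_sum: "l \<in> simplex0 \<Longrightarrow> (\<Sum>i\<in>UNIV. l$i) = 1" by (simp add: simplex0_def)

lemma Cl_simplex: assumes "\<And>i. x$i > 0" shows "Cl a x \<in> simplex0"
  using ta_eq'[OF assms] assms by (simp add: simplex0_def Cl_def)

lemma Cl_shift: assumes xpos: "\<And>i. x$i > 0"
  shows "Cl a (\<chi> i. x$i * exp (a$i * s)) = Cl a x"
proof -
  have "t_a a (\<chi> i. x$i * exp (a$i * s)) = t_a a x - s"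
  proof (rule ta_unique')
    show "\<And>i. (\<chi> i. x$i * exp (a$i * s)) $ i > 0" using xpos by simp
    have "(\<Sum>i\<in>UNIV. (\<chi> i. x$i * exp (a$i * s)) $ i * exp (a$i * (t_a a x - s)))
        = (\<Sum>i\<in>UNIV. x$i * exp (a$i * t_a a x))"
      by (rule sum.cong) (auto simp: mult.assoc mult_exp_exp algebra_simps)
    then show "(\<Sum>i\<in>UNIV. (\<chi> i. x$i * exp (a$i * s)) $ i * exp (a$i * (t_a a x - s))) = 1"
      using ta_eq'[OF xpos] by simp
  qed
  moreover have "x$i * exp (a$i * s) * exp (a$i * (t_a a x - s)) = x$i * exp (a$i * t_a a x)" for i
    by (simp add: mult.assoc mult_exp_exp right_diff_distrib)
  ultimately show ?thesis by (simp add: Cl_def vec_eq_iff)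
qed

lemma Cl_id: assumes "l \<in> simplex0" shows "Cl a l = l"
proof -
  have "t_a a l = 0" using simplex_pos[OF assms] simplex_sum[OF assms]
    by (intro ta_unique') auto
  then show ?thesis by (simp add: Cl_def vec_eq_iff)
qed

lemma oplus_Cl: assumes xpos: "\<And>i. x$i > 0" and ypos: "\<And>i. y$i > 0"
  shows "oplusC a (Cl a x) (Cl a y) = Cl a (cmult x y)"
proof -
  have "cmult (Cl a x) (Cl a y) = (\<chi> i. (cmult x y)$i * exp (a$i * (t_a a x + t_a a y)))"
    by (simp add: cmult_def Cl_def vec_eq_iff algebra_simps mult_exp_exp)
  then show ?thesis unfolding oplusC_def
    using Cl_shift[of "cmult x y"] xpos ypos by (simp add: cmult_def)
qed

lemma eC_simplex: "eC a \<in> simplex0" unfolding eC_def by (rule Cl_simplex) simp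
lemma eC_pos: "eC a $ i > 0" using simplex_pos[OF eC_simplex] .
lemma eC_sum: "(\<Sum>i\<in>UNIV. eC a $ i) = 1" using simplex_sum[OF eC_simplex] .
lemma eC_nth: "eC a $ i = exp (a$i * t_a a 1)" by (simp add: eC_def Cl_def)

definition AA where "AA = (\<Sum>k\<in>UNIV. a$k * eC a $ k)"

lemma AA_pos: "AA > 0" unfolding AA_def
  by (rule sum_pos) (auto intro: mult_pos_pos apos eC_pos)

definition Lg :: "real^'n \<Rightarrow> real^'n" where
  "Lg x = (\<chi> i. eC a $ i * (ln (x$i) - a$i * (\<Sum>j\<in>UNIV. eC a $ j * ln (x$j)) / AA))"

definition Eg :: "real^'n \<Rightarrow> real^'n" where
  "Eg \<xi> = Cl a (\<chi> i. exp (\<xi>$i / eC a $ i))"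

lemma Lg_shift: assumes xpos: "\<And>i. x$i > 0"
  shows "Lg (\<chi> i. x$i * exp (a$i * s)) = Lg x"
proof -
  have lm: "ln (x$j * exp (a$j * s)) = ln (x$j) + a$j * s" for j
    using xpos[of j] by (simp add: ln_mult_pos)
  have lm2: "ln (x$j * exp (s * a$j)) = ln (x$j) + s * a$j" for j
    using xpos[of j] by (simp add: ln_mult_pos)
  have "(\<Sum>j\<in>UNIV. eC a $ j * ln (x$j * exp (a$j * s))) = (\<Sum>j\<in>UNIV. eC a $ j * ln (x$j)) + s * AA"
    by (simp only: lm) (simp add: AA_def sum.distrib algebra_simps sum_distrib_left)
  then show ?thesis using AA_pos
    by (simp add: Lg_def vec_eq_iff lm lm2 field_simps)
qed

lemma Lg_Cl: assumes xpos: "\<And>i. x$i > 0" shows "Lg (Cl a x) = Lg x"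
  unfolding Cl_def using Lg_shift[OF xpos] .

lemma Lg_mult: assumes xpos: "\<And>i. x$i > 0" and ypos: "\<And>i. y$i > 0"
  shows "Lg (cmult x y) = Lg x + Lg y"
proof -
  have "(\<Sum>j\<in>UNIV. eC a $ j * ln (x$j * y$j)) = (\<Sum>j\<in>UNIV. eC a $ j * ln (x$j)) + (\<Sum>j\<in>UNIV. eC a $ j * ln (y$j))"
    using xpos ypos by (simp add: ln_mult_pos sum.distrib algebra_simps)
  moreover have "ln (x$j * y$j) = ln (x$j) + ln (y$j)" for j
    using xpos[of j] ypos[of j] by (simp add: ln_mult_pos)
  ultimately show ?thesis using AA_pos
    by (simp add: Lg_def cmult_def vec_eq_iff field_simps)
qed

lemma Lg_tangent: "Lg x \<in> tangent0"
proof -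
  define S where "S = (\<Sum>j\<in>UNIV. eC a $ j * ln (x$j))"
  have "(\<Sum>i\<in>UNIV. eC a $ i * (ln (x$i) - a$i * S / AA)) = S - (\<Sum>i\<in>UNIV. a$i * eC a $ i) * S / AA"
    by (simp add: S_def algebra_simps sum_subtractf sum_divide_distrib[symmetric] sum_distrib_right)
  also have "\<dots> = 0" using AA_pos by (simp add: AA_def[symmetric])
  finally show ?thesis by (simp add: tangent0_def Lg_def S_def)
qed

lemma Lg_exp: assumes "\<xi> \<in> tangent0" shows "Lg (\<chi> i. exp (\<xi>$i / eC a $ i)) = \<xi>"
proof -
  have "(\<Sum>j\<in>UNIV. eC a $ j * (\<xi>$j / eC a $ j)) = 0"
    using assms eC_pos by (simp add: tangent0_def less_imp_neq[symmetric])
  then show ?thesis using eC_pos by (simp add: Lg_def vec_eq_iff less_imp_neq[symmetric])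
qed

lemma Eg_simplex: "Eg \<xi> \<in> simplex0" unfolding Eg_def by (rule Cl_simplex) simp

lemma Lg_Eg: assumes "\<xi> \<in> tangent0" shows "Lg (Eg \<xi>) = \<xi>"
  unfolding Eg_def by (simp add: Lg_Cl Lg_exp[OF assms])

lemma Eg_Lg: assumes l: "l \<in> simplex0" shows "Eg (Lg l) = l"
proof -
  define S where "S = (\<Sum>j\<in>UNIV. eC a $ j * ln (l$j))"
  have "Lg l $ i / eC a $ i = ln (l$i) + a$i * (- S / AA)" for i
    using eC_pos[of i] by (simp add: Lg_def S_def)
  then have "exp (Lg l $ i / eC a $ i) = exp (ln (l$i)) * exp (a$i * (- S / AA))" for i
    by (simp add: exp_add[symmetric])
  then have "(\<chi> i. exp (Lg l $ i / eC a $ i)) = (\<chi> i. l$i * exp (a$i * (- S / AA)))"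
    using simplex_pos[OF l] by (simp add: vec_eq_iff)
  then show ?thesis unfolding Eg_def using Cl_shift[of l "- S / AA"] simplex_pos[OF l] Cl_id[OF l] by simp
qed

lemma Eg_add: "Eg (\<xi> + \<eta>) = oplusC a (Eg \<xi>) (Eg \<eta>)"
proof -
  have "(\<chi> i. exp ((\<xi> + \<eta>)$i / eC a $ i)) = cmult (\<chi> i. exp (\<xi>$i / eC a $ i)) (\<chi> i. exp (\<eta>$i / eC a $ i))"
    by (simp add: cmult_def vec_eq_iff add_divide_distrib exp_add)
  then show ?thesis unfolding Eg_def by (simp add: oplus_Cl)
qed

lemma Eg_0: "Eg 0 = eC a"
proof -
  have "(\<chi> i. exp ((0::real^'n)$i / eC a $ i)) = 1" by (simp add: vec_eq_iff)
  then show ?thesis by (simp add: Eg_def eC_def)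
qed

lemma Lg_oplus: assumes "l \<in> simplex0" "m \<in> simplex0"
  shows "Lg (oplusC a l m) = Lg l + Lg m"
proof -
  have "cmult l m $ i > 0" for i using simplex_pos[OF assms(1)] simplex_pos[OF assms(2)]
    by (simp add: cmult_def)
  then have "Lg (oplusC a l m) = Lg (cmult l m)" unfolding oplusC_def by (rule Lg_Cl)
  also have "\<dots> = Lg l + Lg m" using simplex_pos[OF assms(1)] simplex_pos[OF assms(2)] by (rule Lg_mult)
  finally show ?thesis .
qed

lemma oplus_simplex: "oplusC a l m \<in> simplex0" if "l \<in> simplex0" "m \<in> simplex0"
  using that by (simp add: oplusC_def Cl_simplex cmult_def simplex_pos)

lemma Lg_eC: "Lg (eC a) = 0"
  using Lg_Eg[of 0] Eg_0 by (simp add: tangent0_def)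

lemma Lg_inj: "l \<in> simplex0 \<Longrightarrow> m \<in> simplex0 \<Longrightarrow> Lg l = Lg m \<Longrightarrow> l = m"
  by (metis Eg_Lg)

lemma delta_bound:
  fixes e c :: "real^'n"
  assumes epos: "\<And>i. e$i > 0" and esum: "(\<Sum>i\<in>UNIV. e$i) = 1"
    and ec: "(\<Sum>i\<in>UNIV. e$i * c$i) = 0"
  shows "\<exists>K1 K r. r > 0 \<and> K1 \<ge> 0 \<and> K \<ge> 0 \<and> (\<forall>t \<delta>. \<bar>t\<bar> < r \<longrightarrow>
           (\<Sum>i\<in>UNIV. e$i * exp (t * c$i + a$i * \<delta>)) = 1 \<longrightarrow>
           \<bar>\<delta>\<bar> \<le> K * t\<^sup>2 \<and> (\<forall>i. \<bar>t * c$i + a$i * \<delta>\<bar> \<le> K1 * \<bar>t\<bar> \<and> \<bar>t * c$i + a$i * \<delta>\<bar> \<le> 1))"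
proof -
  define A where "A = (\<Sum>i\<in>UNIV. a$i * e$i)"
  define M where "M = (\<Sum>i\<in>UNIV. \<bar>c$i\<bar>)"
  define Aa where "Aa = (\<Sum>i\<in>UNIV. a$i)"
  define m where "m = inverse (\<Sum>j\<in>UNIV. 1 / a$j)"
  have Apos: "A > 0" unfolding A_def by (rule sum_pos) (auto intro: mult_pos_pos apos epos)
  have Mnn: "M \<ge> 0" unfolding M_def by (rule sum_nonneg) simp
  have cM: "\<bar>c$i\<bar> \<le> M" for i unfolding M_def by (rule member_le_sum) auto
  have aAa: "a$i \<le> Aa" for i unfolding Aa_def by (rule member_le_sum) (simp_all add: less_imp_le[OF apos])
  have Aann: "Aa \<ge> 0" using aAa[of undefined] apos[of undefined] by linarith
  have invpos: "(\<Sum>j\<in>UNIV. 1 / a$j) > 0" by (rule sum_pos) (auto intro: apos)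
  then have mpos: "m > 0" by (simp add: m_def)
  have am: "m \<le> a$i" for i
  proof -
    have "1 / a$i \<le> (\<Sum>j\<in>UNIV. 1 / a$j)" by (rule member_le_sum) (simp_all add: less_imp_le[OF apos])
    then show ?thesis unfolding m_def using apos[of i] invpos
      by (simp add: divide_simps) (simp add: mult.commute)
  qed
  define K1 where "K1 = M + Aa * M / m"
  have K1nn: "K1 \<ge> 0" unfolding K1_def using Mnn Aann mpos by simp
  define r where "r = 1 / (K1 + 1)"
  define K where "K = K1\<^sup>2 / A"
  have rpos: "r > 0" using K1nn by (simp add: r_def)
  have Knn: "K \<ge> 0" using Apos by (simp add: K_def)
  have main: "\<bar>\<delta>\<bar> \<le> K * t\<^sup>2 \<and> (\<forall>i. \<bar>t * c$i + a$i * \<delta>\<bar> \<le> K1 * \<bar>t\<bar> \<and> \<bar>t * c$i + a$i * \<delta>\<bar> \<le> 1)"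
    if tr: "\<bar>t\<bar> < r" and eq: "(\<Sum>i\<in>UNIV. e$i * exp (t * c$i + a$i * \<delta>)) = 1" for t \<delta>
  proof -
    define x where "x i = t * c$i + a$i * \<delta>" for i
    have eq': "(\<Sum>i\<in>UNIV. e$i * exp (x i)) = 1" using eq by (simp add: x_def)
    have "e$i * (1 + x i) = e$i + t * (e$i * c$i) + \<delta> * (a$i * e$i)" for i
      by (simp add: x_def algebra_simps)
    then have "(\<Sum>i\<in>UNIV. e$i * (1 + x i)) = (\<Sum>i\<in>UNIV. e$i) + t * (\<Sum>i\<in>UNIV. e$i * c$i) + \<delta> * A"
      by (simp only: sum.distrib sum_distrib_left A_def)
    then have lin: "(\<Sum>i\<in>UNIV. e$i * (1 + x i)) = 1 + \<delta> * A"
      using esum ec by simp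
    have "(\<Sum>i\<in>UNIV. e$i * (1 + x i)) \<le> (\<Sum>i\<in>UNIV. e$i * exp (x i))"
      by (rule sum_mono, rule mult_left_mono) (auto simp: exp_ge_add_one_self less_imp_le[OF epos])
    then have "\<delta> * A \<le> 0" using eq' lin by simp
    then have dneg: "\<delta> \<le> 0" using Apos by (simp add: mult_le_0_iff)
    have "x i \<le> \<bar>t\<bar> * M + m * \<delta>" for i
    proof -
      have "t * c$i \<le> \<bar>t\<bar> * M" using cM[of i]
        by (metis abs_ge_self abs_mult abs_ge_zero mult_left_mono order_trans)
      moreover have "a$i * \<delta> \<le> m * \<delta>" using am[of i] dneg by (simp add: mult_right_mono_neg)
      ultimately show ?thesis by (simp add: x_def)
    qed
    then have "(\<Sum>i\<in>UNIV. e$i * exp (x i)) \<le> (\<Sum>i\<in>UNIV. e$i * exp (\<bar>t\<bar> * M + m * \<delta>))"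
      by (intro sum_mono mult_left_mono) (auto simp: less_imp_le[OF epos])
    also have "\<dots> = exp (\<bar>t\<bar> * M + m * \<delta>)" using esum by (simp add: sum_distrib_right[symmetric])
    finally have "1 \<le> exp (\<bar>t\<bar> * M + m * \<delta>)" using eq' by simp
    then have "0 \<le> \<bar>t\<bar> * M + m * \<delta>" by simp
    then have dlow: "- \<delta> \<le> \<bar>t\<bar> * M / m" using mpos by (simp add: field_simps)
    have xb: "\<bar>x i\<bar> \<le> K1 * \<bar>t\<bar>" for i
    proof -
      have "\<bar>x i\<bar> \<le> \<bar>t\<bar> * \<bar>c$i\<bar> + a$i * \<bar>\<delta>\<bar>" using apos[of i]
        by (simp add: x_def abs_mult) (metis abs_triangle_ineq abs_mult abs_of_pos)
      also have "\<dots> \<le> \<bar>t\<bar> * M + Aa * (\<bar>t\<bar> * M / m)"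
      proof (rule add_mono)
        show "\<bar>t\<bar> * \<bar>c$i\<bar> \<le> \<bar>t\<bar> * M" using cM[of i] by (simp add: mult_left_mono)
        have "\<bar>\<delta>\<bar> \<le> \<bar>t\<bar> * M / m" using dlow dneg by simp
        then show "a$i * \<bar>\<delta>\<bar> \<le> Aa * (\<bar>t\<bar> * M / m)"
          using aAa[of i] apos[of i] by (intro mult_mono) auto
      qed
      also have "\<dots> = K1 * \<bar>t\<bar>" by (simp add: K1_def algebra_simps)
      finally show ?thesis .
    qed
    have x1: "\<bar>x i\<bar> \<le> 1" for i
    proof -
      have "K1 * \<bar>t\<bar> \<le> (K1 + 1) * r" using tr K1nn by (intro mult_mono) auto
      also have "\<dots> = 1" using K1nn by (simp add: r_def)
      finally show ?thesis using xb[of i] by simp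
    qed
    have "1 \<le> (\<Sum>i\<in>UNIV. e$i * (1 + x i + (K1 * t)\<^sup>2))"
    proof -
      have "(\<Sum>i\<in>UNIV. e$i * exp (x i)) \<le> (\<Sum>i\<in>UNIV. e$i * (1 + x i + (K1 * t)\<^sup>2))"
      proof (intro sum_mono mult_left_mono)
        fix i
        have "exp (x i) \<le> 1 + x i + (x i)\<^sup>2" using exp_le_quad x1[of i] by simp
        moreover have "(x i)\<^sup>2 \<le> (K1 * t)\<^sup>2"
          using xb[of i] by (metis abs_ge_zero abs_mult abs_of_nonneg K1nn power2_le_iff_abs_le power2_abs)
        ultimately show "exp (x i) \<le> 1 + x i + (K1 * t)\<^sup>2" by simp
      qed (simp add: less_imp_le[OF epos])
      then show ?thesis using eq' by simp
    qed
    also have "\<dots> = 1 + \<delta> * A + (K1 * t)\<^sup>2"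
      using lin esum by (simp add: distrib_left sum.distrib sum_distrib_right[symmetric])
    finally have "- \<delta> \<le> (K1 * t)\<^sup>2 / A" using Apos by (simp add: field_simps)
    then have "\<bar>\<delta>\<bar> \<le> K * t\<^sup>2" using dneg by (simp add: K_def power_mult_distrib)
    then show ?thesis using xb x1 by (simp add: x_def)
  qed
  show ?thesis using rpos K1nn Knn main by blast
qed

lemma Eg_curve_deriv:
  assumes xi: "\<xi> \<in> tangent0"
  shows "((\<lambda>t. Eg (t *\<^sub>R \<xi>)) has_vector_derivative \<xi>) (at 0)"
proof -
  define e where "e = eC a"
  define c :: "real^'n" where "c = (\<chi> i. \<xi>$i / e$i)"
  define t0 where "t0 = t_a a 1"
  have epos: "\<And>i. e$i > 0" using eC_pos by (simp add: e_def)
  have esum: "(\<Sum>i\<in>UNIV. e$i) = 1" using eC_sum by (simp add: e_def)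
  have ecx: "e$i * c$i = \<xi>$i" for i using epos[of i] by (simp add: c_def)
  have ec: "(\<Sum>i\<in>UNIV. e$i * c$i) = 0" using xi by (simp add: ecx tangent0_def)
  obtain K1 K r where r: "r > 0" and K1: "K1 \<ge> 0" and K: "K \<ge> 0" and
    bnd: "\<And>t \<delta>. \<bar>t\<bar> < r \<Longrightarrow> (\<Sum>i\<in>UNIV. e$i * exp (t * c$i + a$i * \<delta>)) = 1 \<Longrightarrow>
           \<bar>\<delta>\<bar> \<le> K * t\<^sup>2 \<and> (\<forall>i. \<bar>t * c$i + a$i * \<delta>\<bar> \<le> K1 * \<bar>t\<bar> \<and> \<bar>t * c$i + a$i * \<delta>\<bar> \<le> 1)"
    using delta_bound[OF epos esum ec] by blast
  define Aa where "Aa = (\<Sum>i\<in>UNIV. a$i)"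
  have aAa: "a$i \<le> Aa" for i unfolding Aa_def by (rule member_le_sum) (simp_all add: less_imp_le[OF apos])
  have Aann: "Aa \<ge> 0" using aAa[of undefined] apos[of undefined] by linarith
  have e1: "e$i \<le> 1" for i
  proof -
    have "e$i \<le> (\<Sum>i\<in>UNIV. e$i)" by (rule member_le_sum) (simp_all add: less_imp_le[OF epos])
    then show ?thesis using esum by simp
  qed
  define B0 where "B0 = K1\<^sup>2 + Aa * K"
  have B0: "B0 \<ge> 0" using Aann K by (simp add: B0_def)
  have comp: "\<bar>Eg (t *\<^sub>R \<xi>) $ i - e$i - t * \<xi>$i\<bar> \<le> B0 * t\<^sup>2" if tr: "\<bar>t\<bar> < r" for t i
  proof -
    define y :: "real^'n" where "y = (\<chi> i. exp ((t *\<^sub>R \<xi>)$i / eC a $ i))"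
    define \<delta> where "\<delta> = t_a a y - t0"
    have Egj: "Eg (t *\<^sub>R \<xi>) $ j = e$j * exp (t * c$j + a$j * \<delta>)" for j
    proof -
      have "Eg (t *\<^sub>R \<xi>) $ j = exp (t * c$j) * exp (a$j * t_a a y)"
        by (simp add: Eg_def Cl_def y_def c_def e_def)
      also have "\<dots> = exp (a$j * t0) * exp (t * c$j + a$j * \<delta>)"
        by (simp add: mult_exp_exp \<delta>_def algebra_simps)
      also have "exp (a$j * t0) = e$j" by (simp add: e_def eC_nth t0_def)
      finally show ?thesis .
    qed
    have "(\<Sum>j\<in>UNIV. e$j * exp (t * c$j + a$j * \<delta>)) = 1"
      using simplex_sum[OF Eg_simplex[of "t *\<^sub>R \<xi>"]] by (simp add: Egj)
    from bnd[OF tr this] have dK: "\<bar>\<delta>\<bar> \<le> K * t\<^sup>2" and xK1: "\<bar>t * c$i + a$i * \<delta>\<bar> \<le> K1 * \<bar>t\<bar>"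
      and x1: "\<bar>t * c$i + a$i * \<delta>\<bar> \<le> 1" by auto
    define x where "x = t * c$i + a$i * \<delta>"
    have "Eg (t *\<^sub>R \<xi>) $ i - e$i - t * \<xi>$i = e$i * ((exp x - 1 - x) + a$i * \<delta>)"
      by (simp add: Egj x_def ecx[symmetric] algebra_simps)
    then have "\<bar>Eg (t *\<^sub>R \<xi>) $ i - e$i - t * \<xi>$i\<bar> = e$i * \<bar>(exp x - 1 - x) + a$i * \<delta>\<bar>"
      using epos[of i] by (simp add: abs_mult)
    also have "\<dots> \<le> 1 * ((K1 * t)\<^sup>2 + Aa * (K * t\<^sup>2))"
    proof (rule mult_mono)
      have "\<bar>(exp x - 1 - x) + a$i * \<delta>\<bar> \<le> \<bar>exp x - 1 - x\<bar> + \<bar>a$i * \<delta>\<bar>" by (rule abs_triangle_ineq)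
      also have "\<bar>exp x - 1 - x\<bar> \<le> x\<^sup>2" using abs_exp_minus x1 by (simp add: x_def)
      also have "x\<^sup>2 \<le> (K1 * t)\<^sup>2"
        using xK1 K1 unfolding x_def
        by (metis abs_ge_zero abs_mult abs_of_nonneg power2_le_iff_abs_le power2_abs)
      also have "\<bar>a$i * \<delta>\<bar> \<le> Aa * (K * t\<^sup>2)"
        using aAa[of i] apos[of i] dK by (simp add: abs_mult) (rule mult_mono, auto)
      finally show "\<bar>(exp x - 1 - x) + a$i * \<delta>\<bar> \<le> (K1 * t)\<^sup>2 + Aa * (K * t\<^sup>2)" by simp
    qed (use e1 epos in \<open>auto simp: less_imp_le\<close>)
    also have "\<dots> = B0 * t\<^sup>2" by (simp add: B0_def algebra_simps power_mult_distrib)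
    finally show ?thesis .
  qed
  show ?thesis
  proof (rule quad_bound_deriv[OF r])
    show "0 \<le> real CARD('n) * B0" using B0 by simp
    fix t :: real assume tr: "\<bar>t\<bar> < r"
    have "norm (Eg (t *\<^sub>R \<xi>) - Eg (0 *\<^sub>R \<xi>) - t *\<^sub>R \<xi>)
        \<le> (\<Sum>i\<in>UNIV. \<bar>(Eg (t *\<^sub>R \<xi>) - Eg (0 *\<^sub>R \<xi>) - t *\<^sub>R \<xi>) $ i\<bar>)"
      by (rule norm_le_l1_cart)
    also have "\<dots> \<le> (\<Sum>i::'n\<in>UNIV. B0 * t\<^sup>2)"
    proof (intro sum_mono)
      fix i
      show "\<bar>(Eg (t *\<^sub>R \<xi>) - Eg (0 *\<^sub>R \<xi>) - t *\<^sub>R \<xi>) $ i\<bar> \<le> B0 * t\<^sup>2"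
        using comp[OF tr, of i] by (simp add: Eg_0 e_def)
    qed
    also have "\<dots> = real CARD('n) * B0 * t\<^sup>2" by simp
    finally show "norm (Eg (t *\<^sub>R \<xi>) - Eg (0 *\<^sub>R \<xi>) - t *\<^sub>R \<xi>) \<le> real CARD('n) * B0 * t\<^sup>2" .
  qed
qed

lemma one_param_ex: assumes xi: "\<xi> \<in> tangent0" shows "one_param a \<xi> (\<lambda>t. Eg (t *\<^sub>R \<xi>))"
  unfolding one_param_def
  using Eg_simplex Eg_0 Eg_curve_deriv[OF xi] by (simp add: Eg_add[symmetric] scaleR_add_left)

lemma one_param_unique:
  assumes op: "one_param a \<xi> \<gamma>" and xi: "\<xi> \<in> tangent0"
  shows "\<gamma> 1 = Eg \<xi>"
proof -
  from op have gs: "\<And>t. \<gamma> t \<in> simplex0" and g0: "\<gamma> 0 = eC a"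
    and gadd: "\<And>s t. \<gamma> (s + t) = oplusC a (\<gamma> s) (\<gamma> t)"
    and gd: "(\<gamma> has_vector_derivative \<xi>) (at 0)" unfolding one_param_def by auto
  have comp_d: "((\<lambda>t. \<gamma> t $ j) has_real_derivative \<xi>$j) (at 0)" for j
    unfolding has_real_derivative_iff_has_vector_derivative
    using bounded_linear.has_vector_derivative[OF bounded_linear_vec_nth gd] by simp
  have ln_d: "((\<lambda>t. ln (\<gamma> t $ j)) has_real_derivative \<xi>$j / eC a $ j) (at 0)" for j
    using DERIV_chain2[OF DERIV_ln[of "\<gamma> 0 $ j"] comp_d[of j]] g0 eC_pos[of j]
    by (simp add: divide_inverse mult.commute)
  have S_d: "((\<lambda>t. \<Sum>j\<in>UNIV. eC a $ j * ln (\<gamma> t $ j)) has_real_derivative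
       (\<Sum>j\<in>UNIV. eC a $ j * (\<xi>$j / eC a $ j))) (at 0)"
    by (intro DERIV_sum DERIV_cmult ln_d)
  have "(\<Sum>j\<in>UNIV. eC a $ j * (\<xi>$j / eC a $ j)) = 0"
    using xi eC_pos by (simp add: tangent0_def less_imp_neq[symmetric])
  with S_d have S_d': "((\<lambda>t. \<Sum>j\<in>UNIV. eC a $ j * ln (\<gamma> t $ j)) has_real_derivative 0) (at 0)" by simp
  have beta: "Lg (\<gamma> 1) $ i = \<xi>$i" for i
  proof (rule additive_deriv)
    show "Lg (\<gamma> (s + t)) $ i = Lg (\<gamma> s) $ i + Lg (\<gamma> t) $ i" for s t
      using gadd Lg_oplus gs by simp
    have "((\<lambda>t. eC a $ i * (ln (\<gamma> t $ i) - a$i * (\<Sum>j\<in>UNIV. eC a $ j * ln (\<gamma> t $ j)) / AA))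
        has_real_derivative eC a $ i * (\<xi>$i / eC a $ i - a$i * 0 / AA)) (at 0)"
      by (intro DERIV_cmult DERIV_diff DERIV_cdivide ln_d S_d')
    then show "((\<lambda>t. Lg (\<gamma> t) $ i) has_real_derivative \<xi>$i) (at 0)"
      using eC_pos[of i] by (simp add: Lg_def)
  qed
  have "\<gamma> 1 = Eg (Lg (\<gamma> 1))" using Eg_Lg[OF gs[of 1]] by simp
  also have "Lg (\<gamma> 1) = \<xi>" using beta by (simp add: vec_eq_iff)
  finally show ?thesis .
qed

lemma ExpC_eq: assumes xi: "\<xi> \<in> tangent0" shows "ExpC a \<xi> = Eg \<xi>"
  unfolding ExpC_def
proof (rule the_equality)
  show "\<exists>\<gamma>. one_param a \<xi> \<gamma> \<and> \<gamma> 1 = Eg \<xi>"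
    using one_param_ex[OF xi] by (intro exI[of _ "\<lambda>t. Eg (t *\<^sub>R \<xi>)"]) simp
  show "\<And>l. \<exists>\<gamma>. one_param a \<xi> \<gamma> \<and> \<gamma> 1 = l \<Longrightarrow> l = Eg \<xi>"
    using one_param_unique[OF _ xi] by blast
qed

lemma tangent_add: "\<xi> \<in> tangent0 \<Longrightarrow> \<eta> \<in> tangent0 \<Longrightarrow> \<xi> + \<eta> \<in> tangent0"
  by (simp add: tangent0_def sum.distrib)
lemma tangent_scale: "\<xi> \<in> tangent0 \<Longrightarrow> c *\<^sub>R \<xi> \<in> tangent0"
  by (simp add: tangent0_def sum_distrib_left[symmetric])
lemma tangent_diff: "\<xi> \<in> tangent0 \<Longrightarrow> \<eta> \<in> tangent0 \<Longrightarrow> \<xi> - \<eta> \<in> tangent0"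
  by (simp add: tangent0_def sum_subtractf)

lemma ExpC_bij: "bij_betw (ExpC a) tangent0 simplex0"
proof (rule bij_betw_byWitness[where f' = Lg])
  show "\<forall>\<xi>\<in>tangent0. Lg (ExpC a \<xi>) = \<xi>" by (simp add: ExpC_eq Lg_Eg)
  show "\<forall>l\<in>simplex0. ExpC a (Lg l) = l" by (simp add: ExpC_eq Lg_tangent Eg_Lg)
  show "ExpC a ` tangent0 \<subseteq> simplex0" by (auto simp: ExpC_eq Eg_simplex)
  show "Lg ` simplex0 \<subseteq> tangent0" by (auto simp: Lg_tangent)
qed

lemma LogC_eq: assumes l: "l \<in> simplex0" shows "LogC a l = Lg l"
  unfolding LogC_def
proof (rule inv_into_f_eq)
  show "inj_on (ExpC a) tangent0" using ExpC_bij by (rule bij_betw_imp_inj_on)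
  show "Lg l \<in> tangent0" by (rule Lg_tangent)
  show "ExpC a (Lg l) = l" using l by (simp add: ExpC_eq Lg_tangent Eg_Lg)
qed

lemma smultC_eq: assumes l: "l \<in> simplex0" shows "smultC a c l = Eg (c *\<^sub>R Lg l)"
  using l by (simp add: smultC_def LogC_eq ExpC_eq tangent_scale Lg_tangent)

lemma smultC_simplex: "l \<in> simplex0 \<Longrightarrow> smultC a c l \<in> simplex0"
  by (simp add: smultC_eq Eg_simplex)

lemma ominusC_simplex: "l \<in> simplex0 \<Longrightarrow> m \<in> simplex0 \<Longrightarrow> ominusC a l m \<in> simplex0"
  by (simp add: ominusC_def oplus_simplex smultC_simplex)

lemma Lg_ominus: assumes l: "l \<in> simplex0" and m: "m \<in> simplex0"
  shows "Lg (ominusC a l m) = Lg l - Lg m"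
proof -
  have sm: "smultC a (-1) m = Eg (- Lg m)" using m by (simp add: smultC_eq)
  have "- Lg m \<in> tangent0" using tangent_scale[OF Lg_tangent, of "-1" m] by simp
  then show ?thesis unfolding ominusC_def sm using l by (simp add: Lg_oplus Eg_simplex Lg_Eg)
qed

lemma distC_eq: assumes l: "l \<in> simplex0" and m: "m \<in> simplex0"
  shows "distC a l m = norm (Lg l - Lg m)"
  using l m by (simp add: distC_def normC_def innerC_def LogC_eq ominusC_simplex Lg_ominus norm_eq_sqrt_inner)

theorem theorem2_pos:
  shows
    "(\<forall>l\<in>simplex0. \<forall>m\<in>simplex0. distC a l m \<ge> 0 \<and> (distC a l m = 0 \<longleftrightarrow> l = m)
         \<and> distC a l m = distC a m l) \<and>
     (\<forall>l\<in>simplex0. \<forall>m\<in>simplex0. \<forall>g\<in>simplex0. distC a l g \<le> distC a l m + distC a m g) \<and>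
     (\<forall>g\<in>simplex0. \<forall>l\<in>simplex0. \<forall>m\<in>simplex0.
         distC a (oplusC a g l) (oplusC a g m) = distC a l m) \<and>
     bij_betw (LogC a) simplex0 tangent0 \<and>
     (\<forall>l\<in>simplex0. \<forall>m\<in>simplex0. LogC a (oplusC a l m) = LogC a l + LogC a m) \<and>
     (\<forall>c::real. \<forall>l\<in>simplex0. LogC a (smultC a c l) = c *\<^sub>R LogC a l) \<and>
     (\<forall>l\<in>simplex0. \<forall>m\<in>simplex0. LogC a l \<bullet> LogC a m = innerC a l m) \<and>
     bij_betw (ExpC a) tangent0 simplex0 \<and>
     (\<forall>\<xi>\<in>tangent0. \<forall>\<eta>\<in>tangent0. ExpC a (\<xi> + \<eta>) = oplusC a (ExpC a \<xi>) (ExpC a \<eta>)) \<and>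
     (\<forall>c::real. \<forall>\<xi>\<in>tangent0. ExpC a (c *\<^sub>R \<xi>) = smultC a c (ExpC a \<xi>)) \<and>
     (\<forall>\<xi>\<in>tangent0. \<forall>\<eta>\<in>tangent0. innerC a (ExpC a \<xi>) (ExpC a \<eta>) = \<xi> \<bullet> \<eta>) \<and>
     (\<forall>l\<in>simplex0. \<forall>m\<in>simplex0.
        (distC a l m)\<^sup>2 =
          (\<Sum>i\<in>UNIV. ((eC a)$i)\<^sup>2 *
             (ln (l$i / m$i) - a$i / (\<Sum>k\<in>UNIV. a$k * (eC a)$k) *
                (\<Sum>j\<in>UNIV. (eC a)$j * ln (l$j / m$j)))\<^sup>2))"
proof (intro conjI ballI allI)
  fix l m :: "real^'n" assume l: "l \<in> simplex0" and m: "m \<in> simplex0"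
  show "distC a l m \<ge> 0" using l m by (simp add: distC_eq)
  show "distC a l m = 0 \<longleftrightarrow> l = m" using l m Lg_inj by (auto simp: distC_eq)
  show "distC a l m = distC a m l" using l m by (simp add: distC_eq norm_minus_commute)
  show "LogC a (oplusC a l m) = LogC a l + LogC a m" using l m by (simp add: LogC_eq oplus_simplex Lg_oplus)
  show "LogC a l \<bullet> LogC a m = innerC a l m" by (simp add: innerC_def)
  fix g :: "real^'n" assume g: "g \<in> simplex0"
  show "distC a l g \<le> distC a l m + distC a m g" using l m g
    by (simp add: distC_eq) (metis norm_triangle_ineq diff_add_cancel add_diff_eq)
next
  fix g l m :: "real^'n" assume g: "g \<in> simplex0" and l: "l \<in> simplex0" and m: "m \<in> simplex0"
  show "distC a (oplusC a g l) (oplusC a g m) = distC a l m"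
    using g l m by (simp add: distC_eq oplus_simplex Lg_oplus)
next
  show "bij_betw (LogC a) simplex0 tangent0"
  proof -
    have "bij_betw Lg simplex0 tangent0"
      by (rule bij_betw_byWitness[where f' = Eg]) (auto simp: Eg_Lg Lg_Eg Lg_tangent Eg_simplex)
    then show ?thesis by (simp add: bij_betw_cong[of simplex0 "LogC a" Lg] LogC_eq)
  qed
next
  fix c :: real and l :: "real^'n" assume l: "l \<in> simplex0"
  show "LogC a (smultC a c l) = c *\<^sub>R LogC a l"
    using l LogC_eq[OF Eg_simplex[of "c *\<^sub>R Lg l"]] Lg_Eg[OF tangent_scale[OF Lg_tangent]]
    by (simp add: LogC_eq smultC_eq)
next
  show "bij_betw (ExpC a) tangent0 simplex0" by (rule ExpC_bij)
next
  fix \<xi> \<eta> :: "real^'n" assume x: "\<xi> \<in> tangent0" and y: "\<eta> \<in> tangent0"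
  show "ExpC a (\<xi> + \<eta>) = oplusC a (ExpC a \<xi>) (ExpC a \<eta>)"
    using x y by (simp add: ExpC_eq tangent_add Eg_add)
  show "innerC a (ExpC a \<xi>) (ExpC a \<eta>) = \<xi> \<bullet> \<eta>"
    using x y by (simp add: ExpC_eq innerC_def LogC_eq Eg_simplex Lg_Eg)
next
  fix c :: real and \<xi> :: "real^'n" assume x: "\<xi> \<in> tangent0"
  show "ExpC a (c *\<^sub>R \<xi>) = smultC a c (ExpC a \<xi>)"
    using x by (simp add: ExpC_eq tangent_scale smultC_eq Eg_simplex Lg_Eg)
next
  fix l m :: "real^'n" assume l: "l \<in> simplex0" and m: "m \<in> simplex0"
  define Sl where "Sl = (\<Sum>j\<in>UNIV. eC a $ j * ln (l$j))"
  define Sm where "Sm = (\<Sum>j\<in>UNIV. eC a $ j * ln (m$j))"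
  have lnd: "ln (l$j / m$j) = ln (l$j) - ln (m$j)" for j
    using simplex_pos[OF l] simplex_pos[OF m] by (simp add: ln_divide_pos)
  have Sd: "(\<Sum>j\<in>UNIV. eC a $ j * ln (l$j / m$j)) = Sl - Sm"
    by (simp add: lnd Sl_def Sm_def right_diff_distrib sum_subtractf)
  have comp: "Lg l $ i - Lg m $ i = eC a $ i * (ln (l$i / m$i) - a$i / AA * (Sl - Sm))" for i
    by (simp add: Lg_def Sl_def[symmetric] Sm_def[symmetric] lnd algebra_simps diff_divide_distrib)
  have "(distC a l m)\<^sup>2 = (Lg l - Lg m) \<bullet> (Lg l - Lg m)"
    using l m by (simp add: distC_eq power2_norm_eq_inner)
  also have "\<dots> = (\<Sum>i\<in>UNIV. ((Lg l - Lg m) $ i)\<^sup>2)"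
    by (simp add: inner_vec_def power2_eq_square)
  also have "\<dots> = (\<Sum>i\<in>UNIV. ((eC a)$i)\<^sup>2 *
             (ln (l$i / m$i) - a$i / (\<Sum>k\<in>UNIV. a$k * (eC a)$k) *
                (\<Sum>j\<in>UNIV. (eC a)$j * ln (l$j / m$j)))\<^sup>2)"
    by (simp only: vector_minus_component comp Sd AA_def power_mult_distrib)
  finally show "(distC a l m)\<^sup>2 = (\<Sum>i\<in>UNIV. ((eC a)$i)\<^sup>2 *
             (ln (l$i / m$i) - a$i / (\<Sum>k\<in>UNIV. a$k * (eC a)$k) *
                (\<Sum>j\<in>UNIV. (eC a)$j * ln (l$j / m$j)))\<^sup>2)" .
qed


end

section \<open>Transfer to negative weights\<close>

lemma ExpC_simplex: "(\<And>i. 0 < a$i) \<Longrightarrow> \<xi> \<in> tangent0 \<Longrightarrow> ExpC a \<xi> \<in> simplex0"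
  by (simp add: ExpC_eq Eg_simplex)

context
  fixes b :: "real^'n"
  assumes bpos: "\<And>i. b$i > 0"
begin

lemma ta_neg: assumes xpos: "\<And>i. x$i > 0" shows "t_a (-b) x = - t_a b x"
  unfolding t_a_def[of "-b" x]
proof (rule the_equality)
  show "(\<Sum>i\<in>UNIV. x$i * exp ((-b)$i * - t_a b x)) = 1" using ta_eq[OF bpos xpos] by simp
  fix s assume "(\<Sum>i\<in>UNIV. x$i * exp ((-b)$i * s)) = 1"
  then have "(\<Sum>i\<in>UNIV. x$i * exp (b$i * (-s))) = 1" by simp
  then have "t_a b x = - s" by (rule ta_unique[OF bpos xpos])
  then show "s = - t_a b x" by simp
qed

lemma Cl_neg: assumes xpos: "\<And>i. x$i > 0" shows "Cl (-b) x = Cl b x"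
  by (simp add: Cl_def ta_neg[OF xpos] vec_eq_iff)

lemma eC_neg: "eC (-b) = eC b" unfolding eC_def by (rule Cl_neg) simp

lemma oplus_neg: "l \<in> simplex0 \<Longrightarrow> m \<in> simplex0 \<Longrightarrow> oplusC (-b) l m = oplusC b l m"
  unfolding oplusC_def by (rule Cl_neg) (simp add: cmult_def simplex0_def)

lemma one_param_neg: "one_param (-b) = one_param b"
proof (intro ext)
  fix \<xi> and \<gamma> :: "real \<Rightarrow> real^'n"
  show "one_param (-b) \<xi> \<gamma> = one_param b \<xi> \<gamma>"
  proof (cases "\<forall>t. \<gamma> t \<in> simplex0")
    case True
    then have "oplusC (-b) (\<gamma> s) (\<gamma> t) = oplusC b (\<gamma> s) (\<gamma> t)" for s t by (simp add: oplus_neg)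
    then show ?thesis by (simp add: one_param_def eC_neg)
  next
    case False
    then show ?thesis unfolding one_param_def by blast
  qed
qed

lemma ExpC_neg: "ExpC (-b) = ExpC b" by (intro ext) (simp add: ExpC_def one_param_neg)
lemma LogC_neg: "LogC (-b) = LogC b" by (intro ext) (simp add: LogC_def ExpC_neg)
lemma smultC_neg: "smultC (-b) = smultC b" by (intro ext) (simp add: smultC_def ExpC_neg LogC_neg)
lemma innerC_neg: "innerC (-b) = innerC b" by (intro ext) (simp add: innerC_def LogC_neg)
lemma normC_neg: "normC (-b) = normC b" by (intro ext) (simp add: normC_def innerC_neg)

lemma ominus_neg: "l \<in> simplex0 \<Longrightarrow> m \<in> simplex0 \<Longrightarrow> ominusC (-b) l m = ominusC b l m"
  by (simp add: ominusC_def smultC_neg oplus_neg smultC_simplex[OF bpos])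

lemma distC_neg: "l \<in> simplex0 \<Longrightarrow> m \<in> simplex0 \<Longrightarrow> distC (-b) l m = distC b l m"
  by (simp add: distC_def ominus_neg normC_neg)

end

theorem theorem2:
  fixes a :: "real^'n"
  assumes N: "CARD('n) \<ge> 2"
    and sgn: "(\<forall>i. a$i > 0) \<or> (\<forall>i. a$i < 0)"
  shows
    \<comment> \<open>distance on the simplex\<close>
    "(\<forall>l\<in>simplex0. \<forall>m\<in>simplex0. distC a l m \<ge> 0 \<and> (distC a l m = 0 \<longleftrightarrow> l = m)
         \<and> distC a l m = distC a m l) \<and>
     (\<forall>l\<in>simplex0. \<forall>m\<in>simplex0. \<forall>g\<in>simplex0. distC a l g \<le> distC a l m + distC a m g) \<and>
     \<comment> \<open>(i) bi-invariance\<close>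
     (\<forall>g\<in>simplex0. \<forall>l\<in>simplex0. \<forall>m\<in>simplex0.
         distC a (oplusC a g l) (oplusC a g m) = distC a l m) \<and>
     \<comment> \<open>(ii) Log is a linear isometry from the simplex onto the tangent space\<close>
     bij_betw (LogC a) simplex0 tangent0 \<and>
     (\<forall>l\<in>simplex0. \<forall>m\<in>simplex0. LogC a (oplusC a l m) = LogC a l + LogC a m) \<and>
     (\<forall>c::real. \<forall>l\<in>simplex0. LogC a (smultC a c l) = c *\<^sub>R LogC a l) \<and>
     (\<forall>l\<in>simplex0. \<forall>m\<in>simplex0. LogC a l \<bullet> LogC a m = innerC a l m) \<and>
     \<comment> \<open>(ii) Exp is a linear isometry from the tangent space onto the simplex\<close>
     bij_betw (ExpC a) tangent0 simplex0 \<and>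
     (\<forall>\<xi>\<in>tangent0. \<forall>\<eta>\<in>tangent0. ExpC a (\<xi> + \<eta>) = oplusC a (ExpC a \<xi>) (ExpC a \<eta>)) \<and>
     (\<forall>c::real. \<forall>\<xi>\<in>tangent0. ExpC a (c *\<^sub>R \<xi>) = smultC a c (ExpC a \<xi>)) \<and>
     (\<forall>\<xi>\<in>tangent0. \<forall>\<eta>\<in>tangent0. innerC a (ExpC a \<xi>) (ExpC a \<eta>) = \<xi> \<bullet> \<eta>) \<and>
     \<comment> \<open>(iii) explicit formula\<close>
     (\<forall>l\<in>simplex0. \<forall>m\<in>simplex0.
        (distC a l m)\<^sup>2 =
          (\<Sum>i\<in>UNIV. ((eC a)$i)\<^sup>2 *
             (ln (l$i / m$i) - a$i / (\<Sum>k\<in>UNIV. a$k * (eC a)$k) *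
                (\<Sum>j\<in>UNIV. (eC a)$j * ln (l$j / m$j)))\<^sup>2))"
proof (cases "\<forall>i. a$i > 0")
  case True
  show ?thesis by (rule theorem2_pos) (use True in auto)
next
  case False
  with sgn have neg: "\<forall>i. a$i < 0" by blast
  define b where "b = - a"
  have bpos: "\<And>i. b$i > 0" using neg by (simp add: b_def)
  have a: "a = - b" by (simp add: b_def)
  have frac: "(-b)$i / (\<Sum>k\<in>UNIV. (-b)$k * (eC b)$k) = b$i / (\<Sum>k\<in>UNIV. b$k * (eC b)$k)" for i
    by (simp add: sum_negf)
  show ?thesis unfolding a
    using theorem2_pos[OF bpos]
    by (simp add: distC_neg[OF bpos] oplus_neg[OF bpos] oplus_simplex[OF bpos] LogC_neg[OF bpos]
        smultC_neg[OF bpos] innerC_neg[OF bpos] ExpC_neg[OF bpos] ExpC_simplex[OF bpos]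
        eC_neg[OF bpos] frac del: vector_uminus_component)
qed

end
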